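(* For $v\ge 0$, $\Lambda(v)=0$ if and only if $v=0$ and $G=\delta_0$.
   Context: Model: Let $G$ be a probability measure on $[0,\infty)$. In the nearest-neighbour lattice $\mathbb Z^2$, every vertical edge receives the deterministic weight $1$, and every horizontal edge (joining $(x,y)$ and $(x+1,y)$) receives a random weight, the horizontal weights being i.i.d. with law $G$. A path is a sequence of points of $\mathbb Z^2$ with consecutive points joined by an edge; its passage time $T(p)$ is the sum of the weights $\tau_e$ over edges $e=(z_k,z_{k+1})$ of $p$, and $T(u,w)=\inf_p T(p)$ over paths from $u$ to $w$. For $v\ge0$, $\Lambda(v)=\lim_{n\to\infty}\frac1nT((0,0),(n,\lceil vn\rceil))$, which exists almost surely and is deterministic. $\delta_0$ is the point mass at $0$. *)

theory Defs
  imports "HOL-Probability.Probability"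
begin

text \<open>First-passage percolation on the lattice Z^2: vertical edges have weight 1,
  the horizontal edge joining (x,y) and (x+1,y) has weight t (x,y).\<close>

type_synonym site = "int \<times> int"

definition lattice_adj :: "site \<Rightarrow> site \<Rightarrow> bool" where
  "lattice_adj u w \<longleftrightarrow> \<bar>fst u - fst w\<bar> + \<bar>snd u - snd w\<bar> = 1"

definition edge_weight :: "(site \<Rightarrow> real) \<Rightarrow> site \<Rightarrow> site \<Rightarrow> real" where
  "edge_weight t u w = (if snd u = snd w then t (min (fst u) (fst w), snd u) else 1)"

definition lattice_path :: "site \<Rightarrow> site \<Rightarrow> site list \<Rightarrow> bool" where
  "lattice_path u w p \<longleftrightarrow> p \<noteq> [] \<and> hd p = u \<and> last p = w \<and>
     (\<forall>i. Suc i < length p \<longrightarrow> lattice_adj (p ! i) (p ! Suc i))"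

definition path_time :: "(site \<Rightarrow> real) \<Rightarrow> site list \<Rightarrow> real" where
  "path_time t p = sum_list (map (\<lambda>(a, b). edge_weight t a b) (zip p (tl p)))"

definition passage_time :: "(site \<Rightarrow> real) \<Rightarrow> site \<Rightarrow> site \<Rightarrow> real" where
  "passage_time t u w = (INF p \<in> {p. lattice_path u w p}. path_time t p)"

end

theory Submission
  imports Defs
begin


definition chain :: "site list \<Rightarrow> bool" where
  "chain p \<longleftrightarrow> (\<forall>i. Suc i < length p \<longrightarrow> lattice_adj (p ! i) (p ! Suc i))"

lemma chain_Cons2: "chain (u # u' # q) \<longleftrightarrow> lattice_adj u u' \<and> chain (u' # q)"
  unfolding chain_def
proof safe
  fix i assume "\<forall>i. Suc i < length (u # u' # q) \<longrightarrow> lattice_adj ((u # u' # q) ! i) ((u # u' # q) ! Suc i)"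
  from this[rule_format, of 0] show "lattice_adj u u'" by simp
next
  fix i assume h: "\<forall>i. Suc i < length (u # u' # q) \<longrightarrow> lattice_adj ((u # u' # q) ! i) ((u # u' # q) ! Suc i)"
    and "Suc i < length (u' # q)"
  then show "lattice_adj ((u' # q) ! i) ((u' # q) ! Suc i)" using h[rule_format, of "Suc i"] by simp
next
  fix i assume "lattice_adj u u'" "\<forall>i. Suc i < length (u' # q) \<longrightarrow> lattice_adj ((u' # q) ! i) ((u' # q) ! Suc i)"
    "Suc i < length (u # u' # q)"
  then show "lattice_adj ((u # u' # q) ! i) ((u # u' # q) ! Suc i)"
    by (cases i) auto
qed

lemma chain_single[simp]: "chain [u]" by (simp add: chain_def)

lemma path_time_Cons2: "path_time t (u # u' # q) = edge_weight t u u' + path_time t (u' # q)"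
  by (simp add: path_time_def)

lemma path_time_single[simp]: "path_time t [u] = 0"
  by (simp add: path_time_def)

lemma edge_weight_nonneg: "(\<And>e. t e \<ge> 0) \<Longrightarrow> edge_weight t u w \<ge> 0"
  by (simp add: edge_weight_def)

lemma path_time_nonneg: "(\<And>e. t e \<ge> 0) \<Longrightarrow> path_time t p \<ge> 0"
  unfolding path_time_def
  by (rule sum_list_nonneg) (auto intro: edge_weight_nonneg)

lemma adj_cases:
  assumes "lattice_adj u w"
  shows "(fst w = fst u \<and> \<bar>snd w - snd u\<bar> = 1) \<or> (snd w = snd u \<and> fst w = fst u + 1)
       \<or> (snd w = snd u \<and> fst w = fst u - 1)"
  using assms unfolding lattice_adj_def by arith

fun wtV :: "int \<Rightarrow> int list \<Rightarrow> real" where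
  "wtV b [] = 0"
| "wtV b (y # ys) = real_of_int \<bar>y - b\<bar> + wtV y ys"

fun wtT :: "(site \<Rightarrow> real) \<Rightarrow> int \<Rightarrow> int list \<Rightarrow> real" where
  "wtT t x [] = 0"
| "wtT t x (y # ys) = t (x, y) + wtT t (x + 1) ys"

lemma wtV_shift: "wtV b ys \<le> real_of_int \<bar>b - b'\<bar> + wtV b' ys"
  by (cases ys) auto

lemma wtV_nonneg: "wtV b ys \<ge> 0"
  by (induction ys arbitrary: b) auto

lemma wtV_nth: "i < length ys \<Longrightarrow> real_of_int \<bar>ys ! i - b\<bar> \<le> wtV b ys"
proof (induction ys arbitrary: b i)
  case Nil then show ?case by simp
next
  case (Cons y ys)
  show ?case
  proof (cases i)
    case 0 then show ?thesis using wtV_nonneg[of y ys] by simp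
  next
    case (Suc j)
    with Cons have "real_of_int \<bar>ys ! j - y\<bar> \<le> wtV y ys" by simp
    then show ?thesis using Suc by simp
  qed
qed

lemma wtT_nonneg: "(\<And>e. t e \<ge> 0) \<Longrightarrow> wtT t x ys \<ge> 0"
  by (induction ys arbitrary: x) (auto intro: add_nonneg_nonneg)

lemma wtT_sum: "wtT t x ys = (\<Sum>i<length ys. t (x + int i, ys ! i))"
proof (induction ys arbitrary: x)
  case Nil then show ?case by simp
next
  case (Cons y ys)
  show ?case by (simp del: sum.lessThan_Suc add: Cons sum.lessThan_Suc_shift algebra_simps)
qed

lemma cross:
  assumes "\<And>e. t e \<ge> 0"
  shows "chain (u # q) \<Longrightarrow> fst u + int m \<le> fst (last (u # q)) \<Longrightarrow>
    \<exists>ys. length ys = m \<and> wtV (snd u) ys + wtT t (fst u) ys \<le> path_time t (u # q)"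
proof (induction q arbitrary: u m)
  case Nil
  then show ?case by (intro exI[of _ "[]"]) auto
next
  case (Cons u' q)
  have adj: "lattice_adj u u'" and ch: "chain (u' # q)" using Cons.prems(1) chain_Cons2 by auto
  have pt: "path_time t (u # u' # q) = edge_weight t u u' + path_time t (u' # q)"
    by (rule path_time_Cons2)
  have lst: "last (u # u' # q) = last (u' # q)" by simp
  show ?case
  proof (cases "m = 0")
    case True
    then show ?thesis using path_time_nonneg[where p="u # u' # q", OF assms]
      by (intro exI[of _ "[]"]) auto
  next
    case m: False
    from adj_cases[OF adj] show ?thesis
    proof (elim disjE conjE)
      assume a: "fst u' = fst u" "\<bar>snd u' - snd u\<bar> = 1"
      then have ew: "edge_weight t u u' = 1" by (auto simp: edge_weight_def)
      from Cons.IH[OF ch, of m] Cons.prems(2) a lst obtain ys where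
        ys: "length ys = m" "wtV (snd u') ys + wtT t (fst u') ys \<le> path_time t (u' # q)" by auto
      have "wtV (snd u) ys \<le> real_of_int \<bar>snd u - snd u'\<bar> + wtV (snd u') ys" by (rule wtV_shift)
      also have "real_of_int \<bar>snd u - snd u'\<bar> = 1" using a by simp
      finally show ?thesis using ys a ew pt by (intro exI[of _ ys]) auto
    next
      assume a: "snd u' = snd u" "fst u' = fst u + 1"
      then have ew: "edge_weight t u u' = t (fst u, snd u)" by (auto simp: edge_weight_def)
      obtain m' where m': "m = Suc m'" using m by (cases m) auto
      from Cons.IH[OF ch, of m'] Cons.prems(2) a lst m' obtain ys where
        ys: "length ys = m'" "wtV (snd u') ys + wtT t (fst u') ys \<le> path_time t (u' # q)" by auto
      show ?thesis using ys a ew pt m' by (intro exI[of _ "snd u # ys"]) auto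
    next
      assume a: "snd u' = snd u" "fst u' = fst u - 1"
      then have ew: "edge_weight t u u' = t (fst u - 1, snd u)" by (auto simp: edge_weight_def)
      from Cons.IH[OF ch, of "Suc m"] Cons.prems(2) a lst obtain ys where
        ys: "length ys = Suc m" "wtV (snd u') ys + wtT t (fst u') ys \<le> path_time t (u' # q)" by auto
      then obtain y0 ys' where ys': "ys = y0 # ys'" by (cases ys) auto
      have "wtV (snd u) ys' \<le> real_of_int \<bar>snd u - y0\<bar> + wtV y0 ys'" by (rule wtV_shift)
      moreover have "t (fst u - 1, y0) \<ge> 0" "edge_weight t u u' \<ge> 0" using assms ew by auto
      ultimately show ?thesis using ys ys' a pt
        by (intro exI[of _ ys']) (auto simp: abs_minus_commute)
    qed
  qed
qed

lemma vert:
  assumes "\<And>e. t e \<ge> 0"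
  shows "chain (u # q) \<Longrightarrow> real_of_int \<bar>snd (last (u # q)) - snd u\<bar> \<le> path_time t (u # q)"
proof (induction q arbitrary: u)
  case Nil
  then show ?case by simp
next
  case (Cons u' q)
  have adj: "lattice_adj u u'" and ch: "chain (u' # q)" using Cons.prems(1) chain_Cons2 by auto
  have pt: "path_time t (u # u' # q) = edge_weight t u u' + path_time t (u' # q)"
    by (rule path_time_Cons2)
  have ih: "real_of_int \<bar>snd (last (u' # q)) - snd u'\<bar> \<le> path_time t (u' # q)" using Cons.IH[OF ch] .
  have ewn: "edge_weight t u u' \<ge> 0" using assms by (simp add: edge_weight_def)
  from adj_cases[OF adj] show ?case
  proof (elim disjE conjE)
    assume a: "fst u' = fst u" "\<bar>snd u' - snd u\<bar> = 1"
    then have ew: "edge_weight t u u' = 1" by (auto simp: edge_weight_def)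
    show ?thesis using ih ew pt a by simp
  next
    assume a: "snd u' = snd u" "fst u' = fst u + 1"
    then show ?thesis using ih pt ewn by simp
  next
    assume a: "snd u' = snd u" "fst u' = fst u - 1"
    then show ?thesis using ih pt ewn by simp
  qed
qed

lemma lattice_path_chain: "lattice_path u w p \<longleftrightarrow> p \<noteq> [] \<and> hd p = u \<and> last p = w \<and> chain p"
  unfolding lattice_path_def chain_def by blast

lemma ex_path_aux: "nat (\<bar>fst w - fst u\<bar> + \<bar>snd w - snd u\<bar>) = k \<Longrightarrow> \<exists>q. chain (u # q) \<and> last (u # q) = w"
proof (induction k arbitrary: u)
  case 0
  then have "\<bar>fst w - fst u\<bar> + \<bar>snd w - snd u\<bar> \<le> 0" by simp
  then have "fst u = fst w" "snd u = snd w" by linarith+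
  then have "u = w" by (simp add: prod_eq_iff)
  then show ?case by (intro exI[of _ "[]"]) auto
next
  case (Suc k)
  have step: "\<exists>q. chain (u # q) \<and> last (u # q) = w"
    if adj: "lattice_adj u u'" and d: "nat (\<bar>fst w - fst u'\<bar> + \<bar>snd w - snd u'\<bar>) = k" for u'
  proof -
    from Suc.IH[OF d] obtain q where q: "chain (u' # q)" "last (u' # q) = w" by blast
    then show ?thesis using adj chain_Cons2 by (intro exI[of _ "u' # q"]) auto
  qed
  obtain a b where u: "u = (a, b)" by fastforce
  obtain c d where w: "w = (c, d)" by fastforce
  have D: "\<bar>c - a\<bar> + \<bar>d - b\<bar> = int k + 1" using Suc.prems u w by simp
  consider "a < c" | "c < a" | "a = c" "b < d" | "a = c" "d < b" using D by linarith
  then show ?case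
  proof cases
    case 1
    have "lattice_adj u (a + 1, b)" by (simp add: u lattice_adj_def)
    moreover have "nat (\<bar>fst w - fst (a + 1, b)\<bar> + \<bar>snd w - snd (a + 1, b)\<bar>) = k" using 1 D by (simp add: w)
    ultimately show ?thesis by (rule step)
  next
    case 2
    have "lattice_adj u (a - 1, b)" by (simp add: u lattice_adj_def)
    moreover have "nat (\<bar>fst w - fst (a - 1, b)\<bar> + \<bar>snd w - snd (a - 1, b)\<bar>) = k" using 2 D by (simp add: w)
    ultimately show ?thesis by (rule step)
  next
    case 3
    have "lattice_adj u (a, b + 1)" by (simp add: u lattice_adj_def)
    moreover have "nat (\<bar>fst w - fst (a, b + 1)\<bar> + \<bar>snd w - snd (a, b + 1)\<bar>) = k" using 3 D by (simp add: w)
    ultimately show ?thesis by (rule step)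
  next
    case 4
    have "lattice_adj u (a, b - 1)" by (simp add: u lattice_adj_def)
    moreover have "nat (\<bar>fst w - fst (a, b - 1)\<bar> + \<bar>snd w - snd (a, b - 1)\<bar>) = k" using 4 D by (simp add: w)
    ultimately show ?thesis by (rule step)
  qed
qed

lemma ex_path: "\<exists>p. lattice_path u w p"
  proof -
  obtain q where "chain (u # q)" "last (u # q) = w" using ex_path_aux[OF refl, of u w] by blast
  then show ?thesis by (intro exI[of _ "u # q"]) (simp add: lattice_path_chain)
qed



lemma finite_geo:
  fixes r :: real and K :: "nat set"
  assumes "finite K" "0 \<le> r" "r < 1"
  shows "(\<Sum>k\<in>K. r ^ k) \<le> 1 / (1 - r)"
proof -
  obtain M where M: "K \<subseteq> {..<M}" using assms(1) finite_nat_bounded by blast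
  have "(\<Sum>k\<in>K. r ^ k) \<le> (\<Sum>k<M. r ^ k)"
    by (rule sum_mono2) (use M assms in auto)
  also have "\<dots> = (1 - r ^ M) / (1 - r)" using assms by (simp add: sum_gp_strict)
  also have "\<dots> \<le> 1 / (1 - r)" using assms by (intro divide_right_mono) auto
  finally show ?thesis .
qed

lemma geom_bound:
  fixes A :: "int set" and lam :: real
  assumes "finite A" "lam > 0"
  shows "(\<Sum>y\<in>A. exp (- lam * real_of_int \<bar>y - b\<bar>)) \<le> (1 + exp (- lam)) / (1 - exp (- lam))"
proof -
  define r where "r = exp (- lam)"
  have r: "0 \<le> r" "r < 1" using assms unfolding r_def by auto
  have e: "exp (- lam * real_of_int \<bar>y - b\<bar>) = r ^ nat \<bar>y - b\<bar>" for y
  proof -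
    have "exp (- lam * real_of_int \<bar>y - b\<bar>) = exp (real (nat \<bar>y - b\<bar>) * (- lam))" by simp
    also have "\<dots> = r ^ nat \<bar>y - b\<bar>" unfolding r_def by (rule exp_of_nat_mult)
    finally show ?thesis .
  qed
  define A1 where "A1 = {y\<in>A. b \<le> y}"
  define A2 where "A2 = {y\<in>A. y < b}"
  have fin: "finite A1" "finite A2" using assms unfolding A1_def A2_def by auto
  have split: "A = A1 \<union> A2" "A1 \<inter> A2 = {}" unfolding A1_def A2_def by auto
  have s1: "(\<Sum>y\<in>A1. r ^ nat \<bar>y - b\<bar>) \<le> 1 / (1 - r)"
  proof -
    have inj: "inj_on (\<lambda>y. nat (y - b)) A1" unfolding A1_def inj_on_def by auto
    have "(\<Sum>y\<in>A1. r ^ nat \<bar>y - b\<bar>) = (\<Sum>y\<in>A1. r ^ nat (y - b))"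
      by (rule sum.cong) (auto simp: A1_def)
    also have "\<dots> = (\<Sum>k\<in>(\<lambda>y. nat (y - b)) ` A1. r ^ k)"
      by (simp add: sum.reindex[OF inj])
    also have "\<dots> \<le> 1 / (1 - r)" using fin r by (intro finite_geo) auto
    finally show ?thesis .
  qed
  have s2: "(\<Sum>y\<in>A2. r ^ nat \<bar>y - b\<bar>) \<le> r / (1 - r)"
  proof -
    have inj: "inj_on (\<lambda>y. nat (b - y - 1)) A2" unfolding A2_def inj_on_def by auto
    have "(\<Sum>y\<in>A2. r ^ nat \<bar>y - b\<bar>) = (\<Sum>y\<in>A2. r * r ^ nat (b - y - 1))"
    proof (rule sum.cong)
      fix y assume "y \<in> A2"
      then have "nat \<bar>y - b\<bar> = Suc (nat (b - y - 1))" unfolding A2_def by auto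
      then show "r ^ nat \<bar>y - b\<bar> = r * r ^ nat (b - y - 1)" by simp
    qed simp
    also have "\<dots> = r * (\<Sum>k\<in>(\<lambda>y. nat (b - y - 1)) ` A2. r ^ k)"
      by (simp add: sum.reindex[OF inj] sum_distrib_left)
    also have "\<dots> \<le> r * (1 / (1 - r))" using fin r by (intro mult_left_mono finite_geo) auto
    finally show ?thesis by simp
  qed
  have "(\<Sum>y\<in>A. exp (- lam * real_of_int \<bar>y - b\<bar>)) = (\<Sum>y\<in>A. r ^ nat \<bar>y - b\<bar>)"
    by (intro sum.cong refl e)
  also have "\<dots> = (\<Sum>y\<in>A1. r ^ nat \<bar>y - b\<bar>) + (\<Sum>y\<in>A2. r ^ nat \<bar>y - b\<bar>)"
    using split fin by (simp add: sum.union_disjoint)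
  also have "\<dots> \<le> 1 / (1 - r) + r / (1 - r)" using s1 s2 by simp
  also have "\<dots> = (1 + r) / (1 - r)" by (simp add: add_divide_distrib)
  finally show ?thesis unfolding r_def .
qed

lemma exp_split: "exp (- (lam * (x + y))) = exp (- (lam * x)) * exp (- (lam * (y::real)))"
  by (simp add: ring_distribs mult_exp_exp)

lemma sum_lists_wtV:
  fixes A :: "int set" and lam c :: real
  assumes fin: "finite A" and bnd: "\<And>b. (\<Sum>y\<in>A. exp (- lam * real_of_int \<bar>y - b\<bar>)) \<le> c"
  shows "(\<Sum>ys\<in>{ys. set ys \<subseteq> A \<and> length ys = n}. exp (- lam * wtV b ys)) \<le> c ^ n"
proof (induction n arbitrary: b)
  case 0
  have "{ys. set ys \<subseteq> A \<and> length ys = 0} = {[]}" by auto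
  then show ?case by simp
next
  case (Suc n)
  have c0: "c \<ge> 0" using bnd[of 0] sum_nonneg[of A "\<lambda>y. exp (- lam * real_of_int \<bar>y - 0\<bar>)"] by auto
  let ?L = "{ys. set ys \<subseteq> A \<and> length ys = n}"
  have inj: "inj_on (\<lambda>(xs, n). n # xs) (?L \<times> A)" by (auto simp: inj_on_def)
  have "(\<Sum>ys\<in>{ys. set ys \<subseteq> A \<and> length ys = Suc n}. exp (- lam * wtV b ys))
      = (\<Sum>(xs, y)\<in>?L \<times> A. exp (- lam * wtV b (y # xs)))"
    unfolding lists_length_Suc_eq by (subst sum.reindex[OF inj]) (simp add: case_prod_beta)
  also have "\<dots> = (\<Sum>xs\<in>?L. \<Sum>y\<in>A. exp (- lam * real_of_int \<bar>y - b\<bar>) * exp (- lam * wtV y xs))"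
    by (simp add: sum.cartesian_product exp_split)
  also have "\<dots> = (\<Sum>y\<in>A. exp (- lam * real_of_int \<bar>y - b\<bar>) * (\<Sum>xs\<in>?L. exp (- lam * wtV y xs)))"
    by (subst sum.swap) (simp add: sum_distrib_left)
  also have "\<dots> \<le> (\<Sum>y\<in>A. exp (- lam * real_of_int \<bar>y - b\<bar>) * c ^ n)"
    by (intro sum_mono mult_left_mono Suc.IH) auto
  also have "\<dots> = (\<Sum>y\<in>A. exp (- lam * real_of_int \<bar>y - b\<bar>)) * c ^ n"
    by (simp add: sum_distrib_right)
  also have "\<dots> \<le> c * c ^ n" using bnd[of b] c0 by (intro mult_right_mono) auto
  finally show ?case by simp
qed

lemma prod_le_pow_ennreal:
  fixes f :: "'b \<Rightarrow> ennreal"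
  assumes "finite I" "\<And>i. i \<in> I \<Longrightarrow> f i \<le> c"
  shows "prod f I \<le> c ^ card I"
  using assms
proof (induction I rule: finite_induct)
  case (insert x F)
  then have "f x * prod f F \<le> c * c ^ card F" by (intro mult_mono) auto
  then show ?case using insert by simp
qed simp



definition Ls :: "nat \<Rightarrow> int list set" where
  "Ls n = {ys. set ys \<subseteq> {- int n..int n} \<and> length ys = n}"

lemma finite_Ls: "finite (Ls n)" unfolding Ls_def by (rule finite_lists_length_eq) simp

lemma omega_bound:
  assumes nn: "\<And>e. t e \<ge> 0" and lam: "lam > 0" and dl: "dl \<le> 1"
    and pt: "passage_time t (0, 0) (int n, 0) < dl * real n"
  shows "ennreal (exp (- lam * (dl * real n))) \<le> (\<Sum>ys\<in>Ls n. ennreal (exp (- lam * (wtV 0 ys + wtT t 0 ys))))"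
proof -
  let ?P = "{p. lattice_path (0, 0) (int n, 0) p}"
  have ne: "path_time t ` ?P \<noteq> {}" using ex_path[of "(0,0)" "(int n, 0)"] by auto
  from cInf_lessD[OF ne] pt obtain p where p: "lattice_path (0, 0) (int n, 0) p" "path_time t p < dl * real n"
    unfolding passage_time_def by auto
  then obtain q where pq: "p = (0, 0) # q" "chain p" "last p = (int n, 0)"
    unfolding lattice_path_chain by (cases p) auto
  from cross[of t, OF nn, of "(0,0)" q n] pq obtain ys where
    ys: "length ys = n" "wtV 0 ys + wtT t 0 ys \<le> path_time t p" by auto
  have wT: "wtT t 0 ys \<ge> 0" by (rule wtT_nonneg) (rule nn)
  have lt: "wtV 0 ys + wtT t 0 ys < dl * real n" using ys p by linarith
  have "dl * real n \<le> real n" using dl mult_right_mono[of dl 1 "real n"] by simp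
  have inL: "ys \<in> Ls n"
    unfolding Ls_def
  proof safe
    fix y assume "y \<in> set ys"
    then obtain i where i: "i < length ys" "y = ys ! i" by (auto simp: in_set_conv_nth)
    have "real_of_int \<bar>ys ! i - 0\<bar> \<le> wtV 0 ys" by (rule wtV_nth) (use i in simp)
    then have "real_of_int \<bar>y\<bar> < real n" using i lt wT \<open>dl * real n \<le> real n\<close> by simp
    then have "\<bar>y\<bar> < int n" by linarith
    then show "y \<in> {- int n..int n}" by (simp add: abs_less_iff)
  qed (use ys in simp)
  have "ennreal (exp (- lam * (dl * real n))) \<le> ennreal (exp (- lam * (wtV 0 ys + wtT t 0 ys)))"
    using lt lam by (intro ennreal_leI) simp
  also have "\<dots> \<le> (\<Sum>ys\<in>Ls n. ennreal (exp (- lam * (wtV 0 ys + wtT t 0 ys))))"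
    by (rule member_le_sum) (use inL finite_Ls in auto)
  finally show ?thesis .
qed



lemma (in prob_space) exp_bound:
  fixes X :: "int \<times> int \<Rightarrow> 'a \<Rightarrow> real"
  assumes indep: "indep_vars (\<lambda>_. borel) X UNIV" and lam: "lam > 0"
    and phi: "\<And>e. (\<integral>\<^sup>+\<omega>. ennreal (exp (- lam * X e \<omega>)) \<partial>M) \<le> ennreal ph" and ph: "ph \<ge> 0"
    and cb: "\<And>b. (\<Sum>y\<in>{- int n..int n}. exp (- lam * real_of_int \<bar>y - b\<bar>)) \<le> c"
  shows "(\<integral>\<^sup>+\<omega>. (\<Sum>ys\<in>Ls n. ennreal (exp (- lam * (wtV 0 ys + wtT (\<lambda>e. X e \<omega>) 0 ys)))) \<partial>M)
    \<le> ennreal ((c * ph) ^ n)"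
proof -
  have meas: "X e \<in> borel_measurable M" for e using indep unfolding indep_vars_def by (cases e) auto
  have c0: "c \<ge> 0" using cb[of 0] sum_nonneg[of "{- int n..int n}" "\<lambda>y. exp (- lam * real_of_int \<bar>y - 0\<bar>)"] by auto
  have indep': "indep_vars (\<lambda>_. borel) (\<lambda>e \<omega>. ennreal (exp (- lam * X e \<omega>))) I" for I
    by (rule indep_vars_compose2[OF indep_vars_subset[OF indep subset_UNIV], where Y = "\<lambda>_ x. ennreal (exp (- lam * x))"]) simp
  have trm: "(\<integral>\<^sup>+\<omega>. ennreal (exp (- lam * (wtV 0 ys + wtT (\<lambda>e. X e \<omega>) 0 ys))) \<partial>M)
      \<le> ennreal (exp (- lam * wtV 0 ys)) * ennreal ph ^ length ys" for ys
  proof -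
    define I where "I = (\<lambda>i. (int i, ys ! i)) ` {..<length ys}"
    have inj: "inj_on (\<lambda>i. (int i, ys ! i)) {..<length ys}" by (auto simp: inj_on_def)
    have cardI: "card I = length ys" unfolding I_def by (simp add: card_image[OF inj])
    have finI: "finite I" unfolding I_def by simp
    have pw: "ennreal (exp (- lam * (wtV 0 ys + wtT (\<lambda>e. X e \<omega>) 0 ys)))
        = ennreal (exp (- lam * wtV 0 ys)) * (\<Prod>e\<in>I. ennreal (exp (- lam * X e \<omega>)))" for \<omega>
    proof -
      have "exp (- lam * wtT (\<lambda>e. X e \<omega>) 0 ys) = (\<Prod>i<length ys. exp (- lam * X (int i, ys ! i) \<omega>))"
        by (simp add: wtT_sum sum_distrib_left exp_sum)
      also have "\<dots> = (\<Prod>e\<in>I. exp (- lam * X e \<omega>))"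
        unfolding I_def by (simp add: prod.reindex[OF inj])
      finally have "exp (- lam * (wtV 0 ys + wtT (\<lambda>e. X e \<omega>) 0 ys))
          = exp (- lam * wtV 0 ys) * (\<Prod>e\<in>I. exp (- lam * X e \<omega>))"
        using exp_split[of lam "wtV 0 ys" "wtT (\<lambda>e. X e \<omega>) 0 ys"] by simp
      then show ?thesis by (simp add: ennreal_mult prod_ennreal prod_nonneg)
    qed
    have "(\<integral>\<^sup>+\<omega>. ennreal (exp (- lam * (wtV 0 ys + wtT (\<lambda>e. X e \<omega>) 0 ys))) \<partial>M)
        = ennreal (exp (- lam * wtV 0 ys)) * (\<integral>\<^sup>+\<omega>. (\<Prod>e\<in>I. ennreal (exp (- lam * X e \<omega>))) \<partial>M)"
      unfolding pw by (rule nn_integral_cmult) (use meas in measurable)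
    also have "(\<integral>\<^sup>+\<omega>. (\<Prod>e\<in>I. ennreal (exp (- lam * X e \<omega>))) \<partial>M)
        = (\<Prod>e\<in>I. \<integral>\<^sup>+\<omega>. ennreal (exp (- lam * X e \<omega>)) \<partial>M)"
      by (rule indep_vars_nn_integral[OF finI indep']) simp
    also have "\<dots> \<le> ennreal ph ^ card I"
      by (rule prod_le_pow_ennreal[OF finI phi])
    finally show ?thesis using cardI by (simp add: mult_left_mono)
  qed
  have "(\<integral>\<^sup>+\<omega>. (\<Sum>ys\<in>Ls n. ennreal (exp (- lam * (wtV 0 ys + wtT (\<lambda>e. X e \<omega>) 0 ys)))) \<partial>M)
      = (\<Sum>ys\<in>Ls n. \<integral>\<^sup>+\<omega>. ennreal (exp (- lam * (wtV 0 ys + wtT (\<lambda>e. X e \<omega>) 0 ys))) \<partial>M)"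
  proof (rule nn_integral_sum)
    fix ys
    have "(\<lambda>\<omega>. wtT (\<lambda>e. X e \<omega>) x ys) \<in> borel_measurable M" for x
      by (induction ys arbitrary: x) (use meas in auto)
    then show "(\<lambda>\<omega>. ennreal (exp (- lam * (wtV 0 ys + wtT (\<lambda>e. X e \<omega>) 0 ys)))) \<in> borel_measurable M"
      by measurable
  qed
  also have "\<dots> \<le> (\<Sum>ys\<in>Ls n. ennreal (exp (- lam * wtV 0 ys)) * ennreal ph ^ n)"
    by (rule sum_mono) (use trm in \<open>auto simp: Ls_def\<close>)
  also have "\<dots> = (\<Sum>ys\<in>Ls n. ennreal (exp (- lam * wtV 0 ys) * ph ^ n))"
    by (intro sum.cong refl) (simp add: ennreal_mult ph ennreal_power)
  also have "\<dots> = ennreal (\<Sum>ys\<in>Ls n. exp (- lam * wtV 0 ys) * ph ^ n)"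
    by (rule sum_ennreal) (simp add: ph)
  also have "\<dots> = ennreal ((\<Sum>ys\<in>Ls n. exp (- lam * wtV 0 ys)) * ph ^ n)"
    by (simp add: sum_distrib_right)
  also have "\<dots> \<le> ennreal (c ^ n * ph ^ n)"
  proof (intro ennreal_leI mult_right_mono)
    show "(\<Sum>ys\<in>Ls n. exp (- lam * wtV 0 ys)) \<le> c ^ n"
      unfolding Ls_def by (rule sum_lists_wtV[OF _ cb]) simp
  qed (use ph in simp)
  finally show ?thesis by (simp add: power_mult_distrib)
qed



lemma choose_lam:
  fixes q eps :: real
  assumes q0: "0 \<le> q" and q1: "q < 1" and eps: "eps > 0"
  shows "\<exists>lam>0. (q + exp (- lam * eps)) * ((1 + exp (- lam)) / (1 - exp (- lam))) < 1"
proof -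
  define eta where "eta = (1 - q) / 4"
  have eta12: "0 < eta" "eta \<le> 1/4" using q0 q1 unfolding eta_def by auto
  have "q + 3 * eta < 1" using q1 unfolding eta_def by (simp add: field_simps)
  note eta = eta12 this
  define lam where "lam = max 1 (max (- ln eta / eps) (- ln (eta / 3)))"
  have lam: "lam > 0" unfolding lam_def by auto
  have "- ln eta / eps \<le> lam" unfolding lam_def by linarith
  then have "- ln eta / eps * eps \<le> lam * eps" using eps by (intro mult_right_mono) auto
  then have "- ln eta \<le> lam * eps" using eps by simp
  then have e1: "exp (- lam * eps) \<le> eta" using eta
    by (metis exp_le_cancel_iff exp_ln minus_le_iff mult_minus_left)
  have "- ln (eta / 3) \<le> lam" unfolding lam_def by simp
  then have r1: "exp (- lam) \<le> eta / 3" using eta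
    by (metis divide_pos_pos exp_le_cancel_iff exp_ln minus_le_iff zero_less_numeral)
  define r where "r = exp (- lam)"
  have r: "0 < r" "r \<le> eta / 3" "r < 1" using r1 lam eta unfolding r_def by auto
  have "(1 + r) / (1 - r) \<le> 1 + eta"
  proof -
    have "eta * r \<le> r" using r eta by (intro mult_left_le_one_le) auto
    moreover have "(1 + eta) * (1 - r) = 1 + eta - r - eta * r" by (simp add: algebra_simps)
    ultimately have "1 + r \<le> (1 + eta) * (1 - r)" using r eta by linarith
    then show ?thesis using r by (simp add: divide_le_eq)
  qed
  moreover have "q + exp (- lam * eps) \<le> q + eta" using e1 by simp
  moreover have "(q + eta) * (1 + eta) < 1"
  proof -
    have "(q + eta) * (1 + eta) = q + eta + q * eta + eta * eta" by (simp add: algebra_simps)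
    also have "q * eta \<le> eta" using q1 eta q0 by (simp add: mult_left_le_one_le)
    also have "eta * eta \<le> eta" using eta by (simp add: mult_left_le_one_le)
    finally show ?thesis using eta by linarith
  qed
  ultimately have "(q + exp (- lam * eps)) * ((1 + r) / (1 - r)) < 1"
    using eta q0 r
    by (smt (verit, best) divide_nonneg_nonneg exp_gt_zero mult_mono)
  then show ?thesis using lam unfolding r_def by blast
qed



lemma (in prob_space) hard:
  fixes X :: "int \<times> int \<Rightarrow> 'a \<Rightarrow> real"
  assumes indep: "indep_vars (\<lambda>_. borel) X UNIV"
    and nonneg: "AE \<omega> in M. \<forall>e. X e \<omega> \<ge> 0"
    and eps: "eps > 0" and q: "\<And>e. prob {\<omega>\<in>space M. X e \<omega> < eps} \<le> q" and q1: "q < 1"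
    and conv: "AE \<omega> in M. (\<lambda>n. passage_time (\<lambda>e. X e \<omega>) (0, 0) (int n, 0) / real n) \<longlonglongrightarrow> 0"
  shows False
proof -
  have meas: "X e \<in> borel_measurable M" for e using indep unfolding indep_vars_def by (cases e) auto
  have q0: "q \<ge> 0" using q[of "(0,0)"] measure_nonneg[of M] by (meson order.trans)
  have phi: "(\<integral>\<^sup>+\<omega>. ennreal (exp (- lam * X e \<omega>)) \<partial>M) \<le> ennreal (q + exp (- lam * eps))"
    if lam: "lam > 0" for lam e
  proof -
    let ?B = "{\<omega>\<in>space M. X e \<omega> < eps}"
    have B: "?B \<in> sets M" using meas[of e] by measurable
    have "(\<integral>\<^sup>+\<omega>. ennreal (exp (- lam * X e \<omega>)) \<partial>M)
        \<le> (\<integral>\<^sup>+\<omega>. ennreal (indicator ?B \<omega>) + ennreal (exp (- lam * eps)) \<partial>M)"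
    proof (rule nn_integral_mono_AE)
      show "AE \<omega> in M. ennreal (exp (- lam * X e \<omega>)) \<le> ennreal (indicator ?B \<omega>) + ennreal (exp (- lam * eps))"
        using nonneg AE_space
      proof eventually_elim
        case (elim \<omega>)
        have x0: "X e \<omega> \<ge> 0" using elim by (cases e) auto
        have "exp (- lam * X e \<omega>) \<le> indicator ?B \<omega> + exp (- lam * eps)"
        proof (cases "X e \<omega> < eps")
          case True
          have "exp (- lam * X e \<omega>) \<le> 1" using x0 lam by simp
          then show ?thesis using True elim by (simp add: indicator_def add_increasing2)
        next
          case False
          then have "exp (- lam * X e \<omega>) \<le> exp (- lam * eps)" using lam by simp
          then show ?thesis by (simp add: add_increasing indicator_def)
        qed
        then show ?case by (simp add: ennreal_plus[symmetric] del: ennreal_plus)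
      qed
    qed
    also have "\<dots> = emeasure M ?B + ennreal (exp (- lam * eps))"
      using B by (subst nn_integral_add) (auto simp: emeasure_space_1 ennreal_indicator)
    also have "\<dots> = ennreal (prob ?B + exp (- lam * eps))"
      by (simp add: emeasure_eq_measure ennreal_plus)
    also have "\<dots> \<le> ennreal (q + exp (- lam * eps))"
      using q[of e] by (intro ennreal_leI) simp
    finally show ?thesis .
  qed
  obtain lam where lam: "lam > 0" and rho1: "(q + exp (- lam * eps)) * ((1 + exp (- lam)) / (1 - exp (- lam))) < 1"
    using choose_lam[OF q0 q1 eps] by blast
  define ph where "ph = q + exp (- lam * eps)"
  define c where "c = (1 + exp (- lam)) / (1 - exp (- lam))"
  define rho where "rho = c * ph"
  have ph0: "ph > 0" unfolding ph_def using q0 by (simp add: add_nonneg_pos)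
  have "exp (- lam) < 1" using lam by simp
  then have c0: "c > 0" unfolding c_def by (intro divide_pos_pos) (auto simp: add_pos_nonneg)
  have rho: "0 < rho" "rho < 1" unfolding rho_def using rho1 ph0 c0
    by (simp_all only: ph_def[symmetric] c_def[symmetric] mult.commute[of ph c] mult_pos_pos)
  have cb: "(\<Sum>y\<in>{- int n..int n}. exp (- lam * real_of_int \<bar>y - b\<bar>)) \<le> c" for n b
    unfolding c_def by (rule geom_bound) (use lam in auto)
  define dl where "dl = min 1 (- ln rho / (2 * lam))"
  have lnr: "ln rho < 0" using rho by simp
  have dl: "0 < dl" "dl \<le> 1" unfolding dl_def using lnr lam by (auto simp: divide_neg_pos)
  define th where "th = exp (lam * dl) * rho"
  have th: "0 \<le> th" "th < 1"
  proof -
    show "0 \<le> th" unfolding th_def using rho by simp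
    have "lam * dl \<le> lam * (- ln rho / (2 * lam))" unfolding dl_def using lam by (intro mult_left_mono) auto
    also have "\<dots> = - ln rho / 2" using lam by simp
    finally have "exp (lam * dl) \<le> exp (- ln rho / 2)" by simp
    then have "th \<le> exp (- ln rho / 2) * exp (ln rho)" unfolding th_def using rho by (simp add: mult_right_mono)
    also have "\<dots> = exp (ln rho / 2)" by (simp add: mult_exp_exp)
    also have "\<dots> < 1" using lnr by simp
    finally show "th < 1" .
  qed
  define S where "S n \<omega> = (\<Sum>ys\<in>Ls n. ennreal (exp (- lam * (wtV 0 ys + wtT (\<lambda>e. X e \<omega>) 0 ys))))" for n \<omega>
  define B where "B n = {\<omega>\<in>space M. ennreal (exp (- lam * (dl * real n))) \<le> S n \<omega>}" for n
  have Smeas: "S n \<in> borel_measurable M" for n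
  proof -
    have "(\<lambda>\<omega>. wtT (\<lambda>e. X e \<omega>) x ys) \<in> borel_measurable M" for x ys
      by (induction ys arbitrary: x) (use meas in auto)
    then show ?thesis unfolding S_def by measurable
  qed
  have Bmeas: "B n \<in> sets M" for n unfolding B_def using Smeas[of n] by measurable
  have PB: "measure M (B n) \<le> th ^ n" for n
  proof -
    let ?a = "exp (- lam * (dl * real n))"
    have "(\<integral>\<^sup>+\<omega>. ennreal ?a * indicator (B n) \<omega> \<partial>M) \<le> (\<integral>\<^sup>+\<omega>. S n \<omega> \<partial>M)"
      by (rule nn_integral_mono) (auto simp: B_def indicator_def)
    also have "\<dots> \<le> ennreal ((c * ph) ^ n)"
      unfolding S_def by (rule exp_bound[OF indep lam phi[OF lam, folded ph_def] _ cb]) (use ph0 in auto)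
    finally have "ennreal (?a * measure M (B n)) \<le> ennreal (rho ^ n)"
      using Bmeas[of n] by (simp add: nn_integral_cmult_indicator emeasure_eq_measure ennreal_mult rho_def)
    then have "?a * measure M (B n) \<le> rho ^ n" using rho by (simp add: ennreal_le_iff)
    then have "measure M (B n) \<le> rho ^ n / ?a" by (simp add: field_simps)
    also have "\<dots> = rho ^ n * exp (lam * dl) ^ n"
      by (simp add: exp_minus divide_inverse exp_of_nat_mult[symmetric] mult.commute mult.left_commute)
    also have "\<dots> = th ^ n" unfolding th_def by (simp add: power_mult_distrib mult.commute)
    finally show ?thesis .
  qed
  have ev: "AE \<omega> in M. \<exists>N. \<forall>n\<ge>N. \<omega> \<in> B n"
    using nonneg conv AE_space
  proof eventually_elim
    case (elim \<omega>)
    have "eventually (\<lambda>n. passage_time (\<lambda>e. X e \<omega>) (0, 0) (int n, 0) / real n < dl) sequentially"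
      using elim(2) dl(1) by (rule order_tendstoD(2))
    moreover have "eventually (\<lambda>n. n \<ge> (1::nat)) sequentially" by (rule eventually_ge_at_top)
    ultimately have "eventually (\<lambda>n. \<omega> \<in> B n) sequentially"
    proof eventually_elim
      case (elim n)
      then have "passage_time (\<lambda>e. X e \<omega>) (0, 0) (int n, 0) < dl * real n"
        by (simp add: divide_less_eq)
      from omega_bound[of "\<lambda>e. X e \<omega>", OF _ lam dl(2) this] \<open>\<forall>e. X e \<omega> \<ge> 0\<close> \<open>\<omega> \<in> space M\<close>
      show ?case unfolding B_def S_def by auto
    qed
    then show ?case by (simp add: eventually_at_top_linorder)
  qed
  define C where "C N = (\<Inter>n\<in>{N..}. B n)" for N
  have Cnull: "C N \<in> null_sets M" for N
  proof -
    have Cs: "C N \<in> sets M" unfolding C_def using Bmeas by auto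
    have "measure M (C N) \<le> th ^ n" if "n \<ge> N" for n
    proof -
      have "measure M (C N) \<le> measure M (B n)"
        using that Bmeas by (intro finite_measure_mono) (auto simp: C_def)
      then show ?thesis using PB[of n] by linarith
    qed
    moreover have "(\<lambda>n. th ^ n) \<longlonglongrightarrow> 0" using th by (intro LIMSEQ_power_zero) auto
    ultimately have "measure M (C N) \<le> 0"
      by (intro LIMSEQ_le_const[of "\<lambda>n. th ^ n" 0 "measure M (C N)"]) auto
    then have "emeasure M (C N) = 0" using Cs by (simp add: emeasure_eq_measure measure_nonneg antisym)
    then show ?thesis using Cs by auto
  qed
  have "AE \<omega> in M. \<forall>N. \<omega> \<notin> C N"
    unfolding AE_all_countable using Cnull by (auto intro: AE_not_in)
  with ev have "AE \<omega> in M. False"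
    by eventually_elim (auto simp: C_def)
  then show False by (simp add: AE_False)
qed



lemma (in prob_space) AE_ex: assumes "AE x in M. P x" shows "\<exists>x. P x"
proof (rule ccontr)
  assume "\<not> (\<exists>x. P x)"
  then have "AE x in M. False" using assms by (auto elim: eventually_mono)
  then show False by (simp add: AE_False)
qed

lemma passage_zero: "passage_time (\<lambda>_. 0) (0, 0) (int n, 0) = 0"
proof -
  define p where "p = map (\<lambda>i. (int i, 0::int)) [0..<Suc n]"
  have lp: "lattice_path (0, 0) (int n, 0) p"
    unfolding lattice_path_def p_def
  proof (intro conjI allI impI)
    fix i assume "Suc i < length (map (\<lambda>i. (int i, 0::int)) [0..<Suc n])"
    then have "Suc i < Suc n" by simp
    then show "lattice_adj (map (\<lambda>i. (int i, 0::int)) [0..<Suc n] ! i) (map (\<lambda>i. (int i, 0::int)) [0..<Suc n] ! Suc i)"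
      by (simp add: lattice_adj_def nth_append del: upt_Suc)
  qed (simp_all del: upt_Suc add: hd_map last_map hd_upt)
  have snd0: "x \<in> set p \<Longrightarrow> snd x = 0" for x unfolding p_def by auto
  have pt: "path_time (\<lambda>_. 0) p = 0"
  proof -
    have eq: "map (\<lambda>(a, b). edge_weight (\<lambda>_. 0) a b) (zip p (tl p)) = map (\<lambda>_. 0) (zip p (tl p))"
    proof (rule map_cong[OF refl])
      fix x assume x: "x \<in> set (zip p (tl p))"
      obtain a b where ab: "x = (a, b)" by (rule prod.exhaust)
      have "a \<in> set p" "b \<in> set (tl p)" using x ab by (auto dest: set_zip_leftD set_zip_rightD)
      then have "a \<in> set p" "b \<in> set p" by (auto simp: list.set_sel(2) dest: list.set_sel(2)[rotated])
      then show "(case x of (a, b) \<Rightarrow> edge_weight (\<lambda>_. 0) a b) = 0"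
        using ab snd0 by (simp add: edge_weight_def)
    qed
    show ?thesis unfolding path_time_def eq by simp
  qed
  let ?S = "path_time (\<lambda>_. 0) ` {p. lattice_path (0, 0) (int n, 0) p}"
  have bdd: "bdd_below ?S" by (intro bdd_belowI[of _ 0]) (auto intro: path_time_nonneg)
  have "Inf ?S \<le> 0" using cInf_lower[OF _ bdd, of 0] lp pt by force
  moreover have "Inf ?S \<ge> 0" using lp by (intro cInf_greatest) (auto intro: path_time_nonneg)
  ultimately show ?thesis unfolding passage_time_def by simp
qed

lemma passage_lower:
  assumes "\<And>e. t e \<ge> 0"
  shows "real_of_int \<bar>m\<bar> \<le> passage_time t (0, 0) (k, m)"
  unfolding passage_time_def
proof (rule cInf_greatest)
  show "path_time t ` {p. lattice_path (0, 0) (k, m) p} \<noteq> {}" using ex_path[of "(0,0)" "(k,m)"] by auto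
next
  fix x assume "x \<in> path_time t ` {p. lattice_path (0, 0) (k, m) p}"
  then obtain p where p: "lattice_path (0, 0) (k, m) p" "x = path_time t p" by auto
  then obtain q where "p = (0,0) # q" "chain p" "last p = (k, m)"
    unfolding lattice_path_chain by (cases p) auto
  with vert[of t, OF assms, of "(0,0)" q] p show "real_of_int \<bar>m\<bar> \<le> x" by simp
qed

lemma delta_char:
  assumes G: "prob_space G" and sG: "sets G = sets borel" and G0: "emeasure G {0..} = 1"
    and z: "\<And>eps. eps > 0 \<Longrightarrow> measure G {eps..} = 0"
  shows "G = return borel (0::real)"
proof -
  interpret G: prob_space G by (rule G)
  have sp: "space G = UNIV" using sets_eq_imp_space_eq[OF sG] by simp
  have n1: "{..<(0::real)} \<in> null_sets G"
  proof -
    have "G.prob {0..} = 1" using G0 by (simp add: G.emeasure_eq_measure)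
    moreover have "G.prob (space G - {0..}) = 1 - G.prob {0..}"
      by (rule G.prob_compl) (simp add: sG)
    moreover have "space G - {0..} = {..<(0::real)}" using sp by auto
    ultimately have "G.prob {..<0} = 0" by simp
    then show ?thesis by (simp add: G.emeasure_eq_measure null_sets_def sG)
  qed
  have n2: "{1 / real (Suc k)..} \<in> null_sets G" for k
    using z[of "1 / real (Suc k)"] by (simp add: G.emeasure_eq_measure null_sets_def sG)
  define N where "N = {..<(0::real)} \<union> (\<Union>k. {1 / real (Suc k)..})"
  have N: "N \<in> null_sets G" unfolding N_def using n1 n2 by auto
  have UN: "UNIV - N = {0}"
  proof safe
    fix x :: real assume "x \<notin> N"
    then have x: "x \<ge> 0" "\<And>k. x < 1 / real (Suc k)" unfolding N_def by (auto simp: not_le)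
    show "x = 0"
    proof (rule ccontr)
      assume "x \<noteq> 0"
      then have "x > 0" using x by simp
      then obtain k where "inverse (real (Suc k)) < x" using reals_Archimedean by blast
      then show False using x(2)[of k] by (simp add: divide_inverse)
    qed
  next
    show "0 \<in> N \<Longrightarrow> False" unfolding N_def by auto
  qed simp
  show ?thesis
  proof (rule measure_eqI)
    show "sets G = sets (return borel 0)" by (simp add: sG)
  next
    fix A assume A: "A \<in> sets G"
    have "emeasure G A = emeasure G (A - N)" using emeasure_Diff_null_set[OF N A] by simp
    also have "A - N = A \<inter> {0}" using UN by auto
    also have "emeasure G (A \<inter> {0}) = indicator A (0::real)"
    proof (cases "0 \<in> A")
      case True
      then have "A \<inter> {0} = UNIV - N" using UN by auto
      then have "emeasure G (A \<inter> {0}) = emeasure G (UNIV - N)" by simp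
      also have "\<dots> = emeasure G UNIV" using emeasure_Diff_null_set[OF N, of UNIV] sp sG by simp
      also have "\<dots> = 1" using G.emeasure_space_1 sp by simp
      finally show ?thesis using True by simp
    next
      case False
      then show ?thesis by simp
    qed
    also have "\<dots> = emeasure (return borel 0) A" using A sG by simp
    finally show "emeasure G A = emeasure (return borel 0) A" .
  qed
qed



theorem lemma1p2:
  fixes M :: "'a measure" and G :: "real measure"
    and X :: "int \<times> int \<Rightarrow> 'a \<Rightarrow> real" and v L :: real
  assumes "prob_space M"
    and "prob_space G" and "sets G = sets borel" and "emeasure G {0..} = 1"
    and "prob_space.indep_vars M (\<lambda>_. borel) X UNIV"
    and "\<And>e. distr M borel (X e) = G"
    and "v \<ge> 0"
    and "AE \<omega> in M. (\<lambda>n. passage_time (\<lambda>e. X e \<omega>) (0, 0) (int n, \<lceil>v * real n\<rceil>) / real n)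
                      \<longlonglongrightarrow> L"
  shows "L = 0 \<longleftrightarrow> (v = 0 \<and> G = return borel 0)"
proof -
  interpret prob_space M by (rule assms(1))
  interpret G: prob_space G by (rule assms(2))
  note indep = assms(5)
  note conv = assms(8)
  have meas: "X e \<in> borel_measurable M" for e using indep unfolding indep_vars_def by (cases e) auto
  have em: "emeasure M (X e -` A \<inter> space M) = emeasure G A" if "A \<in> sets borel" for e A
    using emeasure_distr[OF meas that, of e] assms(6)[of e] by simp
  have pm: "prob (X e -` A \<inter> space M) = G.prob A" if "A \<in> sets borel" for e A
    using em[OF that, of e] by (simp add: emeasure_eq_measure G.emeasure_eq_measure)
  have AEone: "AE \<omega> in M. X e \<omega> \<in> A" if "A \<in> sets borel" "G.prob A = 1" for e A
  proof -
    have "AE \<omega> in M. \<omega> \<in> X e -` A \<inter> space M" using pm[OF that(1), of e] that(2) by (intro AE_prob_1) simp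
    then show ?thesis by (auto elim: eventually_mono)
  qed
  have G0: "G.prob {0..} = 1" using assms(4) by (simp add: G.emeasure_eq_measure)
  have nonneg: "AE \<omega> in M. \<forall>e. X e \<omega> \<ge> 0"
    unfolding AE_all_countable using AEone[OF _ G0] by auto
  show ?thesis
  proof
    assume L0: "L = 0"
    have v0: "v = 0"
    proof (rule ccontr)
      assume "v \<noteq> 0"
      then have vp: "v > 0" using assms(7) by simp
      from AE_ex[OF eventually_conj[OF nonneg conv]] obtain \<omega> where
        \<omega>: "\<forall>e. X e \<omega> \<ge> 0"
          "(\<lambda>n. passage_time (\<lambda>e. X e \<omega>) (0, 0) (int n, \<lceil>v * real n\<rceil>) / real n) \<longlonglongrightarrow> L" by blast
      have "v \<le> L"
      proof (rule LIMSEQ_le_const[OF \<omega>(2)], intro exI allI impI)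
        fix n :: nat assume "1 \<le> n"
        have "v * real n \<le> real_of_int \<bar>\<lceil>v * real n\<rceil>\<bar>" by linarith
        also have "\<dots> \<le> passage_time (\<lambda>e. X e \<omega>) (0, 0) (int n, \<lceil>v * real n\<rceil>)"
          by (rule passage_lower) (use \<omega>(1) in auto)
        finally show "v \<le> passage_time (\<lambda>e. X e \<omega>) (0, 0) (int n, \<lceil>v * real n\<rceil>) / real n"
          using \<open>1 \<le> n\<close> by (simp add: le_divide_eq)
      qed
      then show False using vp L0 by simp
    qed
    have "G = return borel 0"
    proof (rule ccontr)
      assume nG: "G \<noteq> return borel 0"
      obtain eps where eps: "eps > 0" "G.prob {eps..} \<noteq> 0"
        using delta_char[OF assms(2,3,4)] nG by blast
      define q where "q = G.prob {..<eps}"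
      have "G.prob (space G - {eps..}) = 1 - G.prob {eps..}"
        by (rule G.prob_compl) (simp add: assms(3))
      moreover have "space G - {eps..} = {..<eps}"
        using sets_eq_imp_space_eq[OF assms(3)] by auto
      ultimately have "q = 1 - G.prob {eps..}" unfolding q_def by simp
      then have q1: "q < 1" using eps(2) measure_nonneg[of G "{eps..}"] by linarith
      have qe: "prob {\<omega>\<in>space M. X e \<omega> < eps} \<le> q" for e
      proof -
        have "{\<omega>\<in>space M. X e \<omega> < eps} = X e -` {..<eps} \<inter> space M" by auto
        then show ?thesis using pm[of "{..<eps}" e] unfolding q_def by simp
      qed
      have conv0: "AE \<omega> in M. (\<lambda>n. passage_time (\<lambda>e. X e \<omega>) (0, 0) (int n, 0) / real n) \<longlonglongrightarrow> 0"
        using conv v0 L0 by simp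
      show False by (rule hard[OF indep nonneg eps(1) qe q1 conv0])
    qed
    with v0 show "v = 0 \<and> G = return borel 0" by simp
  next
    assume h: "v = 0 \<and> G = return borel 0"
    have Gz: "G.prob {0} = 1" using h by (simp add: measure_def)
    have zero: "AE \<omega> in M. \<forall>e. X e \<omega> = 0"
      unfolding AE_all_countable using AEone[OF _ Gz] by auto
    from AE_ex[OF eventually_conj[OF zero conv]] obtain \<omega> where
      \<omega>: "\<forall>e. X e \<omega> = 0"
        "(\<lambda>n. passage_time (\<lambda>e. X e \<omega>) (0, 0) (int n, \<lceil>v * real n\<rceil>) / real n) \<longlonglongrightarrow> L" by blast
    have "(\<lambda>e. X e \<omega>) = (\<lambda>_. 0)" using \<omega>(1) by auto
    then have "(\<lambda>n. passage_time (\<lambda>e. X e \<omega>) (0, 0) (int n, \<lceil>v * real n\<rceil>) / real n) = (\<lambda>n. 0)"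
      using h by (simp add: passage_zero)
    with \<omega>(2) have "(\<lambda>n. 0::real) \<longlonglongrightarrow> L" by simp
    then show "L = 0" using LIMSEQ_unique tendsto_const by blast
  qed
qed

end
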